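(* Let $\mathcal{H}$ be an infinite dimensional complex Hilbert space and let $\phi:\mathcal{B}(\mathcal{H})\to\mathcal{B}(\mathcal{H})$ be a bijective map preserving the Douglas solution in both directions. Then for every $B\in\mathcal{B}(\mathcal{H})$: $\operatorname{ran}B=\mathcal{H}$ if and only if $\operatorname{ran}\phi(B)=\mathcal{H}$.
   Context: $\mathcal{B}(\mathcal{H})$ denotes the algebra of all bounded linear operators on $\mathcal{H}$. For $A,B\in\mathcal{B}(\mathcal{H})$ with $\operatorname{ran}A\subseteq\operatorname{ran}B$, the Douglas solution of $A=BX$ is the unique $D\in\mathcal{B}(\mathcal{H})$ with $BD=A$ and $\operatorname{ran}D\subseteq(\ker B)^\perp$. A map $\phi:\mathcal{B}(\mathcal{H})\to\mathcal{B}(\mathcal{H})$ preserves the Douglas solution in both directions if for all $A,B,X\in\mathcal{B}(\mathcal{H})$: $X$ is the Douglas solution of $A=BX$ if and only if $\phi(X)$ is the Douglas solution of $\phi(A)=\phi(B)Y$. *)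

theory Defs
  imports "HOL-Analysis.Analysis"
begin

class complex_hilbert = real_normed_vector + complete_space +
  fixes scaleC :: "complex \<Rightarrow> 'a \<Rightarrow> 'a"
    and cinner :: "'a \<Rightarrow> 'a \<Rightarrow> complex"
  assumes scaleC_add_right: "scaleC a (x + y) = scaleC a x + scaleC a y"
    and scaleC_add_left: "scaleC (a + b) x = scaleC a x + scaleC b x"
    and scaleC_scaleC: "scaleC a (scaleC b x) = scaleC (a * b) x"
    and scaleC_one: "scaleC 1 x = x"
    and scaleR_scaleC: "scaleR r x = scaleC (complex_of_real r) x"
    and cinner_add_left: "cinner (x + y) z = cinner x z + cinner y z"
    and cinner_scaleC_left: "cinner (scaleC c x) y = cnj c * cinner x y"
    and cinner_commute: "cinner x y = cnj (cinner y x)"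
    and cinner_self_norm: "cinner x x = complex_of_real ((norm x)\<^sup>2)"

definition fin_dim_C :: "'a::complex_hilbert itself \<Rightarrow> bool" where
  "fin_dim_C _ \<longleftrightarrow> (\<exists>S::'a set. finite S \<and> (\<forall>x. \<exists>c. x = (\<Sum>s\<in>S. scaleC (c s) s)))"

definition bounded_op :: "('a::complex_hilbert \<Rightarrow> 'a) \<Rightarrow> bool" where
  "bounded_op T \<longleftrightarrow> (\<forall>x y. T (x + y) = T x + T y) \<and> (\<forall>c x. T (scaleC c x) = scaleC c (T x))
      \<and> (\<exists>K. \<forall>x. norm (T x) \<le> norm x * K)"

definition BH :: "('a::complex_hilbert \<Rightarrow> 'a) set" where
  "BH = {T. bounded_op T}"

definition ker_op :: "('a::complex_hilbert \<Rightarrow> 'a) \<Rightarrow> 'a set" where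
  "ker_op T = {x. T x = 0}"

definition orth_compl :: "'a::complex_hilbert set \<Rightarrow> 'a set" where
  "orth_compl S = {y. \<forall>x\<in>S. cinner x y = 0}"

definition douglas_solution :: "('a::complex_hilbert \<Rightarrow> 'a) \<Rightarrow> ('a \<Rightarrow> 'a) \<Rightarrow> ('a \<Rightarrow> 'a) \<Rightarrow> bool" where
  "douglas_solution A B X \<longleftrightarrow> range A \<subseteq> range B \<and> X \<in> BH \<and> B \<circ> X = A
      \<and> range X \<subseteq> orth_compl (ker_op B)"

definition preserves_douglas_both :: "(('a::complex_hilbert \<Rightarrow> 'a) \<Rightarrow> ('a \<Rightarrow> 'a)) \<Rightarrow> bool" where
  "preserves_douglas_both \<phi> \<longleftrightarrow> (\<forall>A\<in>BH. \<forall>B\<in>BH. \<forall>X\<in>BH.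
      douglas_solution A B X \<longleftrightarrow> douglas_solution (\<phi> A) (\<phi> B) (\<phi> X))"

end

theory Submission
  imports Defs
begin

lemma cinner_add_right: "cinner x (y + z) = cinner x y + cinner x z"
proof -
  have "cinner x (y + z) = cnj (cinner (y + z) x)" by (rule cinner_commute)
  also have "\<dots> = cnj (cinner y x) + cnj (cinner z x)" by (simp add: cinner_add_left)
  also have "\<dots> = cinner x y + cinner x z" by (simp add: cinner_commute[of x y] cinner_commute[of x z])
  finally show ?thesis .
qed

lemma cinner_scaleC_right: "cinner x (scaleC c y) = c * cinner x y"
proof -
  have "cinner x (scaleC c y) = cnj (cinner (scaleC c y) x)" by (rule cinner_commute)
  also have "\<dots> = c * cnj (cinner y x)" by (simp add: cinner_scaleC_left)
  also have "\<dots> = c * cinner x y" by (simp add: cinner_commute[of x y])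
  finally show ?thesis .
qed

lemma cinner_scaleR_left: "cinner (scaleR r x) y = complex_of_real r * cinner x y"
  by (simp add: scaleR_scaleC cinner_scaleC_left)

lemma cinner_zero_left: "cinner 0 y = 0"
  using cinner_add_left[of 0 0 y] by simp

lemma cinner_minus_left: "cinner (- x) y = - (cinner x y)"
  using cinner_add_left[of x "-x" y] by (simp add: cinner_zero_left add_eq_0_iff)

lemma cinner_diff_left: "cinner (x - y) z = cinner x z - cinner y z"
  using cinner_add_left[of x "-y" z] by (simp add: cinner_minus_left)

lemma cinner_diff_right: "cinner x (y - z) = cinner x y - cinner x z"
proof -
  have "cinner x (y - z) = cnj (cinner (y - z) x)" by (rule cinner_commute)
  also have "\<dots> = cinner x y - cinner x z" by (simp add: cinner_diff_left cinner_commute[of x y] cinner_commute[of x z])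
  finally show ?thesis .
qed

lemma cinner_zero_right: "cinner y 0 = 0"
  using cinner_diff_right[of y 0 0] by simp


lemma norm_sq_add: "(norm (a + b))\<^sup>2 = (norm a)\<^sup>2 + (norm b)\<^sup>2 + 2 * Re (cinner a b)"
proof -
  have "complex_of_real ((norm (a+b))\<^sup>2) = cinner (a+b) (a+b)" by (simp only: cinner_self_norm)
  also have "\<dots> = cinner a a + cinner a b + cinner b a + cinner b b"
    by (simp add: cinner_add_left cinner_add_right)
  also have "\<dots> = complex_of_real ((norm a)\<^sup>2) + complex_of_real ((norm b)\<^sup>2) + (cinner a b + cnj (cinner a b))"
    by (simp add: cinner_self_norm cinner_commute[of b a])
  also have "\<dots> = complex_of_real ((norm a)\<^sup>2 + (norm b)\<^sup>2 + 2 * Re (cinner a b))"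
    by (simp add: complex_add_cnj)
  finally show ?thesis by (simp only: of_real_eq_iff)
qed

lemma norm_sq_diff: "(norm (a - b))\<^sup>2 = (norm a)\<^sup>2 + (norm b)\<^sup>2 - 2 * Re (cinner a b)"
proof -
  have "cinner a (-b) = - cinner a b"
    using cinner_minus_left[of b a] cinner_commute[of a "-b"] cinner_commute[of b a] by simp
  then show ?thesis using norm_sq_add[of a "- b"] by simp
qed

lemma parallelogram: "(norm (a + (b::'a::complex_hilbert)))\<^sup>2 + (norm (a - b))\<^sup>2 = 2 * (norm a)\<^sup>2 + 2 * (norm b)\<^sup>2"
  using norm_sq_add[of a b] norm_sq_diff[of a b] by simp


lemma real_var_zero:
  fixes c N :: real
  assumes N: "N \<ge> 0" and h: "\<And>s. 0 \<le> s\<^sup>2 * N - 2 * s * c"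
  shows "c = 0"
proof -
  define s where "s = c / (N + 1)"
  have "0 \<le> s\<^sup>2 * N - 2 * s * c" by (rule h)
  then have "0 \<le> (s\<^sup>2 * N - 2 * s * c) * (N+1)\<^sup>2" using N by simp
  also have "(s\<^sup>2 * N - 2 * s * c) * (N+1)\<^sup>2 = c\<^sup>2 * N - 2 * c\<^sup>2 * (N + 1)"
  proof -
    have "N + 1 \<noteq> 0" using N by linarith
    then have e: "s * (N + 1) = c" by (simp add: s_def)
    have "(s\<^sup>2 * N - 2 * s * c) * (N+1)\<^sup>2 = (s * (N+1))\<^sup>2 * N - 2 * (s * (N+1)) * c * (N + 1)"
      by (simp add: power2_eq_square algebra_simps)
    then show ?thesis by (simp add: e power2_eq_square)
  qed
  finally have "0 \<le> - c\<^sup>2 * (N + 2)" by (simp add: algebra_simps)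
  moreover have "c\<^sup>2 * (N + 2) \<ge> 0" using N by simp
  ultimately have "c\<^sup>2 * (N + 2) = 0" by linarith
  then show ?thesis using N by simp
qed

lemma orth_of_min:
  fixes K :: "'a::complex_hilbert set" and z :: 'a
  assumes Kadd: "\<And>a b. a \<in> K \<Longrightarrow> b \<in> K \<Longrightarrow> a + b \<in> K"
    and Ksc: "\<And>c a. a \<in> K \<Longrightarrow> scaleC c a \<in> K"
    and min: "\<And>k. k \<in> K \<Longrightarrow> norm z \<le> norm (z - k)"
  shows "z \<in> orth_compl K"
proof -
  have re0: "Re (cinner z k) = 0" if k: "k \<in> K" for k
  proof (rule real_var_zero[of "(norm k)\<^sup>2"])
    show "0 \<le> (norm k)\<^sup>2" by simp
    fix s :: real
    have sk: "scaleR s k \<in> K" using Ksc[OF k, of "complex_of_real s"] by (simp add: scaleR_scaleC)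
    have "norm z \<le> norm (z - scaleR s k)" by (rule min[OF sk])
    then have "(norm z)\<^sup>2 \<le> (norm (z - scaleR s k))\<^sup>2" by (simp add: power_mono)
    also have "\<dots> = (norm z)\<^sup>2 + (norm (scaleR s k))\<^sup>2 - 2 * Re (cinner z (scaleR s k))"
      by (rule norm_sq_diff)
    also have "cinner z (scaleR s k) = complex_of_real s * cinner z k"
      by (simp add: scaleR_scaleC cinner_scaleC_right)
    also have "(norm (scaleR s k))\<^sup>2 = s\<^sup>2 * (norm k)\<^sup>2"
      by (simp add: power_mult_distrib)
    finally show "0 \<le> s\<^sup>2 * (norm k)\<^sup>2 - 2 * s * Re (cinner z k)" by simp
  qed
  show ?thesis unfolding orth_compl_def
  proof (intro CollectI ballI)
    fix k assume k: "k \<in> K"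
    have a: "Re (cinner z k) = 0" by (rule re0[OF k])
    have "Re (cinner z (scaleC \<i> k)) = 0" by (rule re0[OF Ksc[OF k]])
    then have b: "Im (cinner z k) = 0" by (simp add: cinner_scaleC_right)
    have "cinner z k = 0" using a b complex_eq_iff by auto
    then show "cinner k z = 0" by (simp add: cinner_commute[of k z])
  qed
qed


lemma lin3:
  fixes A B C P Q d :: real
  shows "A \<le> d\<^sup>2 + P \<Longrightarrow> B \<le> d\<^sup>2 + Q \<Longrightarrow> 4 * d\<^sup>2 \<le> C \<Longrightarrow> 2 * A + 2 * B - C \<le> 2 * (d\<^sup>2 + P) + 2 * (d\<^sup>2 + Q) - 4 * d\<^sup>2"
  by (simp add: algebra_simps)

lemma proj_exists:
  fixes K :: "'a::complex_hilbert set" and x :: 'a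
  assumes clK: "closed K" and K0: "0 \<in> K"
    and Kadd: "\<And>a b. a \<in> K \<Longrightarrow> b \<in> K \<Longrightarrow> a + b \<in> K"
    and Ksc: "\<And>c a. a \<in> K \<Longrightarrow> scaleC c a \<in> K"
  shows "\<exists>p\<in>K. x - p \<in> orth_compl K \<and> norm (x - p) \<le> norm x"
proof -
  have Ksr: "scaleR r a \<in> K" if "a \<in> K" for r a
    using Ksc[OF that, of "complex_of_real r"] by (simp add: scaleR_scaleC)
  define D where "D = (\<lambda>k. norm (x - k)) ` K"
  define d where "d = Inf D"
  have Dne: "D \<noteq> {}" using K0 by (auto simp: D_def)
  have bdd: "bdd_below D" unfolding D_def by (rule bdd_belowI[of _ 0]) auto
  have d_le: "d \<le> norm (x - k)" if "k \<in> K" for k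
    unfolding d_def by (rule cInf_lower) (use that bdd in \<open>auto simp: D_def\<close>)
  have d0: "0 \<le> d" unfolding d_def by (rule cInf_greatest[OF Dne]) (auto simp: D_def)
  have "\<exists>k\<in>K. norm (x - k) < d + 1 / real (Suc n)" for n
  proof -
    have "Inf D < d + 1 / real (Suc n)" unfolding d_def[symmetric] by simp
    from cInf_lessD[OF Dne this] show ?thesis by (auto simp: D_def)
  qed
  then have "\<forall>n. \<exists>k. k \<in> K \<and> norm (x - k) < d + 1 / real (Suc n)" by blast
  from choice[OF this] obtain kk where kk: "\<forall>n. kk n \<in> K \<and> norm (x - kk n) < d + 1 / real (Suc n)"
    by blast
  then have kkK: "\<And>n. kk n \<in> K" and kkd: "\<And>n. norm (x - kk n) < d + 1 / real (Suc n)" by auto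
  have sq: "(norm (x - kk n))\<^sup>2 \<le> d\<^sup>2 + (2 * d + 1) / real (Suc n)" for n
  proof -
    define t where "t = 1 / real (Suc n)"
    have t0: "0 < t" "t \<le> 1" by (auto simp: t_def)
    have "(norm (x - kk n))\<^sup>2 \<le> (d + t)\<^sup>2"
      using kkd[of n] by (intro power_mono) (auto simp: t_def)
    also have "\<dots> = d\<^sup>2 + 2 * d * t + t * t" by (simp add: power2_eq_square algebra_simps)
    also have "\<dots> \<le> d\<^sup>2 + 2 * d * t + t" using t0 by (simp add: mult_le_cancel_left1)
    also have "\<dots> = d\<^sup>2 + (2 * d + 1) / real (Suc n)" by (simp add: t_def field_simps)
    finally show ?thesis .
  qed
  have est: "(norm (kk m - kk n))\<^sup>2 \<le> (2 * d + 1) * (2 / real (Suc m) + 2 / real (Suc n))" for m n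
  proof -
    define a where "a = x - kk m"
    define b where "b = x - kk n"
    define mid where "mid = scaleR (1/2) (kk m + kk n)"
    have midK: "mid \<in> K" unfolding mid_def by (intro Ksr Kadd kkK)
    have "a + b = scaleR 2 (x - mid)" by (simp add: a_def b_def mid_def algebra_simps scaleR_2)
    then have "norm (a + b) = 2 * norm (x - mid)" by simp
    then have "norm (a + b) \<ge> 2 * d" using d_le[OF midK] by simp
    then have ab: "(norm (a + b))\<^sup>2 \<ge> 4 * d\<^sup>2"
      using d0 power_mono[of "2*d" "norm (a+b)" 2] by (simp add: power_mult_distrib)
    have "a - b = kk n - kk m" by (simp add: a_def b_def)
    then have "norm (kk m - kk n) = norm (a - b)" by (simp add: norm_minus_commute)
    then have "(norm (kk m - kk n))\<^sup>2 = 2 * (norm a)\<^sup>2 + 2 * (norm b)\<^sup>2 - (norm (a + b))\<^sup>2"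
      using parallelogram[of a b] by simp
    also have "\<dots> \<le> 2 * (d\<^sup>2 + (2 * d + 1) / real (Suc m)) + 2 * (d\<^sup>2 + (2 * d + 1) / real (Suc n)) - 4 * d\<^sup>2"
      unfolding a_def b_def by (rule lin3[OF sq[of m] sq[of n] ab[unfolded a_def b_def]])
    also have "\<dots> = (2 * d + 1) * (2 / real (Suc m) + 2 / real (Suc n))" by (simp add: divide_inverse algebra_simps)
    finally show ?thesis .
  qed
  have "Cauchy kk"
  proof (rule CauchyI)
    fix e :: real assume e: "0 < e"
    define c where "c = 2 * d + 1"
    have c0: "0 < c" using d0 by (simp add: c_def)
    have "0 < e\<^sup>2 / (4 * c)" using e c0 by simp
    then obtain M where M: "inverse (real (Suc M)) < e\<^sup>2 / (4 * c)"
      using reals_Archimedean by blast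
    have "\<forall>m\<ge>M. \<forall>n\<ge>M. norm (kk m - kk n) < e"
    proof (intro allI impI)
      fix m n assume mn: "M \<le> m" "M \<le> n"
      have im: "inverse (real (Suc m)) \<le> inverse (real (Suc M))"
        by (rule le_imp_inverse_le) (use mn in auto)
      have iN: "inverse (real (Suc n)) \<le> inverse (real (Suc M))"
        by (rule le_imp_inverse_le) (use mn in auto)
      have "(norm (kk m - kk n))\<^sup>2 \<le> c * (2 / real (Suc m) + 2 / real (Suc n))"
        unfolding c_def by (rule est)
      also have "\<dots> = c * (2 * inverse (real (Suc m)) + 2 * inverse (real (Suc n)))"
        by (simp add: divide_inverse)
      also have "\<dots> \<le> c * (4 * inverse (real (Suc M)))"
      proof -
        have "2 * inverse (real (Suc m)) + 2 * inverse (real (Suc n)) \<le> 4 * inverse (real (Suc M))"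
          using im iN by linarith
        then show ?thesis using c0 by (intro mult_left_mono) auto
      qed
      also have "\<dots> = (4 * c) * inverse (real (Suc M))" by simp
      also have "\<dots> < (4 * c) * (e\<^sup>2 / (4 * c))"
        by (rule mult_strict_left_mono[OF M]) (use c0 in simp)
      also have "\<dots> = e\<^sup>2" using c0 by simp
      finally have "(norm (kk m - kk n))\<^sup>2 < e\<^sup>2" .
      then show "norm (kk m - kk n) < e" using e by (simp add: power2_less_imp_less)
    qed
    then show "\<exists>M. \<forall>m\<ge>M. \<forall>n\<ge>M. norm (kk m - kk n) < e" by blast
  qed
  then obtain p where lim: "kk \<longlonglongrightarrow> p" using Cauchy_convergent_iff convergent_def by blast
  have pK: "p \<in> K" using closed_sequentially[OF clK kkK lim] .
  have "norm (x - p) \<le> d"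
  proof (rule LIMSEQ_le)
    show "(\<lambda>n. norm (x - kk n)) \<longlonglongrightarrow> norm (x - p)" by (intro tendsto_intros lim)
    show "(\<lambda>n. d + 1 / real (Suc n)) \<longlonglongrightarrow> d"
      using tendsto_add[OF tendsto_const[of d] LIMSEQ_inverse_real_of_nat] by (simp add: divide_inverse)
    show "\<exists>N. \<forall>n\<ge>N. norm (x - kk n) \<le> d + 1 / real (Suc n)" using kkd less_imp_le by blast
  qed
  then have pmin: "norm (x - p) \<le> norm (x - k)" if "k \<in> K" for k using d_le[OF that] by linarith
  have "x - p \<in> orth_compl K"
  proof (rule orth_of_min[OF Kadd Ksc])
    fix k assume "k \<in> K"
    then have "norm (x - p) \<le> norm (x - (p + k))" using pmin Kadd pK by blast
    then show "norm (x - p) \<le> norm (x - p - k)" by (simp add: algebra_simps)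
  qed (auto)
  moreover have "norm (x - p) \<le> norm x" using pmin[OF K0] by simp
  ultimately show ?thesis using pK by blast
qed


context complex_hilbert begin
subclass banach ..
end

lemma bounded_op_linear:
  assumes "bounded_op (T :: 'a::complex_hilbert \<Rightarrow> 'a)"
  shows "bounded_linear T"
proof -
  from assms have add: "\<And>x y. T (x + y) = T x + T y" and sc: "\<And>c x. T (scaleC c x) = scaleC c (T x)"
    and bd: "\<exists>K. \<forall>x. norm (T x) \<le> norm x * K" unfolding bounded_op_def by auto
  from bd obtain K where K: "\<And>x. norm (T x) \<le> norm x * K" by blast
  show ?thesis
  proof (rule bounded_linear_intro[OF add _ K])
    fix r x show "T (scaleR r x) = scaleR r (T x)" by (simp add: scaleR_scaleC sc)
  qed
qed

lemma open_mapping_baire: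
  fixes B :: "'a::complex_hilbert \<Rightarrow> 'a"
  assumes lin: "bounded_linear B" and sur: "surj B"
  shows "\<exists>n r y0. 0 < r \<and> ball y0 r \<subseteq> closure (B ` ball 0 (real n))"
proof (rule ccontr)
  assume H: "\<not> ?thesis"
  define G where "G = range (\<lambda>n::nat. closure (B ` ball 0 (real n)))"
  have "euclidean interior_of \<Union>G = {}"
  proof (rule Baire_category_alt)
    show "completely_metrizable_space (euclidean :: 'a topology) \<or> locally_compact_space (euclidean :: 'a topology) \<and> regular_space (euclidean :: 'a topology)"
      using completely_metrizable_space_euclidean by blast
    show "countable G" unfolding G_def by simp
    fix T assume "T \<in> G"
    then obtain n where T: "T = closure (B ` ball 0 (real n))" unfolding G_def by blast
    show "closedin euclidean T \<and> euclidean interior_of T = {}"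
    proof
      show "closedin euclidean T" unfolding T by simp
      show "euclidean interior_of T = {}"
      proof (rule ccontr)
        assume "euclidean interior_of T \<noteq> {}"
        then obtain y0 where y0: "y0 \<in> interior T" by auto
        have "open (interior T)" by simp
        then obtain r where r: "0 < r" "ball y0 r \<subseteq> interior T"
          using y0 unfolding open_contains_ball by blast
        then have "ball y0 r \<subseteq> T" using interior_subset by blast
        then show False using H T r(1) by blast
      qed
    qed
  qed
  moreover have "\<Union>G = UNIV"
  proof -
    have "y \<in> \<Union>G" for y
    proof -
      obtain x where x: "y = B x" using sur by (rule surjE)
      obtain n :: nat where n: "norm x < real n" using reals_Archimedean2[of "norm x"] by blast
      have "x \<in> ball 0 (real n)" using n by simp
      then have "y \<in> B ` ball 0 (real n)" using x by (rule rev_image_eqI)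
      then have "y \<in> closure (B ` ball 0 (real n))" by (rule subsetD[OF closure_subset])
      then show ?thesis unfolding G_def by (rule UN_I[rotated]) simp
    qed
    then show ?thesis by blast
  qed
  ultimately show False by simp
qed


lemma open_mapping_approx:
  fixes B :: "'a::complex_hilbert \<Rightarrow> 'a"
  assumes lin: "bounded_linear B" and sur: "surj B"
  shows "\<exists>M\<ge>0. \<forall>y e. 0 < e \<longrightarrow> (\<exists>x. norm x \<le> M * norm y \<and> norm (B x - y) < e)"
proof -
  obtain n r y0 where r: "0 < r" and sub: "ball y0 r \<subseteq> closure (B ` ball 0 (real n))"
    using open_mapping_baire[OF lin sur] by blast
  interpret bounded_linear B by (rule lin)
  have appr: "\<exists>a. norm a < real n \<and> dist (B a) z < e"
    if z: "z \<in> ball y0 r" and e: "0 < e" for z e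
  proof -
    have "z \<in> closure (B ` ball 0 (real n))" by (rule subsetD[OF sub z])
    then have "\<forall>e>0. \<exists>w\<in>B ` ball 0 (real n). dist w z < e" by (simp only: closure_approachable)
    then obtain w where w: "w \<in> B ` ball 0 (real n)" "dist w z < e" using e by blast
    from w(1) obtain a where a: "a \<in> ball 0 (real n)" "w = B a" by (rule imageE)
    have "norm a < real n" using a(1) by simp
    then show ?thesis using w(2) a(2) by blast
  qed
  have step: "\<exists>x. norm x < 2 * real n \<and> norm (B x - y) < e" if y: "norm y < r" and e: "0 < e" for y e
  proof -
    have "y0 + y \<in> ball y0 r" using y by (simp add: dist_norm)
    from appr[OF this, of "e/2"] e obtain a where a: "norm a < real n" "dist (B a) (y0 + y) < e/2" by auto
    have "y0 \<in> ball y0 r" using r by simp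
    from appr[OF this, of "e/2"] e obtain b where b: "norm b < real n" "dist (B b) y0 < e/2" by auto
    have "norm (a - b) \<le> norm a + norm b" by (rule norm_triangle_ineq4)
    then have n1: "norm (a - b) < 2 * real n" using a(1) b(1) by linarith
    have "B (a - b) - y = (B a - (y0 + y)) - (B b - y0)" by (simp add: diff algebra_simps)
    then have "norm (B (a - b) - y) \<le> norm (B a - (y0 + y)) + norm (B b - y0)"
      by (simp only: norm_triangle_ineq4)
    also have "\<dots> < e" using a(2) b(2) by (simp add: dist_norm)
    finally show ?thesis using n1 by blast
  qed
  define M where "M = 4 * real n / r"
  have M0: "M \<ge> 0" using r by (simp add: M_def)
  have "\<exists>x. norm x \<le> M * norm y \<and> norm (B x - y) < e" if e: "0 < e" for y e
  proof (cases "y = 0")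
    case True
    then show ?thesis using e by (intro exI[of _ 0]) (simp add: zero)
  next
    case False
    then have ny: "norm y > 0" by simp
    define t where "t = r / (2 * norm y)"
    have t0: "t > 0" using r ny by (simp add: t_def)
    have "norm (scaleR t y) = r / 2" using ny t0 r by (simp add: t_def)
    then have "norm (scaleR t y) < r" using r by simp
    from step[OF this, of "t * e"] t0 e obtain x' where
      x': "norm x' < 2 * real n" "norm (B x' - scaleR t y) < t * e" by auto
    define x where "x = scaleR (1/t) x'"
    have "norm x = norm x' / t" using t0 by (simp add: x_def)
    also have "\<dots> \<le> 2 * real n / t" using x'(1) t0 by (simp add: divide_right_mono)
    also have "\<dots> = M * norm y" using ny r by (simp add: t_def M_def field_simps)
    finally have nx: "norm x \<le> M * norm y" .
    have "B x - y = scaleR (1/t) (B x' - scaleR t y)" using t0 by (simp add: x_def scaleR algebra_simps)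
    then have "norm (B x - y) = norm (B x' - scaleR t y) / t" using t0 by simp
    also have "\<dots> < e" using x'(2) t0 by (simp add: divide_less_eq mult.commute)
    finally show ?thesis using nx by blast
  qed
  then show ?thesis using M0 by blast
qed


lemma open_mapping_bound:
  fixes B :: "'a::complex_hilbert \<Rightarrow> 'a"
  assumes lin: "bounded_linear B" and sur: "surj B"
  shows "\<exists>C\<ge>0. \<forall>y. \<exists>x. B x = y \<and> norm x \<le> C * norm y"
proof -
  obtain M where M0: "M \<ge> 0"
    and MA: "\<And>y e. 0 < e \<Longrightarrow> \<exists>x. norm x \<le> M * norm y \<and> norm (B x - y) < e"
    using open_mapping_approx[OF lin sur] by blast
  interpret bounded_linear B by (rule lin)
  define f where "f z e = (SOME x. norm x \<le> M * norm z \<and> norm (B x - z) < e)" for z e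
  have f: "norm (f z e) \<le> M * norm z \<and> norm (B (f z e) - z) < e" if "0 < e" for z e
    unfolding f_def by (rule someI_ex) (rule MA[OF that])
  have "\<exists>x. B x = y \<and> norm x \<le> (2 * M) * norm y" for y
  proof (cases "y = 0")
    case True
    then show ?thesis by (intro exI[of _ 0]) (simp add: zero)
  next
    case False
    define Y where "Y = norm y"
    have Y0: "Y > 0" using False by (simp add: Y_def)
    define ys where "ys = rec_nat y (\<lambda>n z. z - B (f z (Y / 2 ^ Suc n)))"
    define xs where "xs n = f (ys n) (Y / 2 ^ Suc n)" for n
    have ys0: "ys 0 = y" by (simp add: ys_def)
    have ysS: "ys (Suc n) = ys n - B (xs n)" for n by (simp add: ys_def xs_def)
    have fx: "norm (xs n) \<le> M * norm (ys n) \<and> norm (B (xs n) - ys n) < Y / 2 ^ Suc n" for n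
      unfolding xs_def by (rule f) (use Y0 in simp)
    have bys: "norm (ys n) \<le> Y / 2 ^ n" for n
    proof (cases n)
      case 0 then show ?thesis by (simp add: ys0 Y_def)
    next
      case (Suc m)
      have "norm (ys (Suc m)) = norm (B (xs m) - ys m)" by (simp add: ysS norm_minus_commute)
      also have "\<dots> < Y / 2 ^ Suc m" using fx[of m] by simp
      finally show ?thesis using Suc by simp
    qed
    define g where "g n = (M * Y) * (1/2) ^ n" for n
    have sg: "summable g" unfolding g_def by (intro summable_mult summable_geometric) simp
    have bxs: "norm (xs n) \<le> g n" for n
    proof -
      have "norm (xs n) \<le> M * norm (ys n)" using fx[of n] by simp
      also have "\<dots> \<le> M * (Y / 2 ^ n)" using bys[of n] M0 by (rule mult_left_mono)
      also have "\<dots> = g n" by (simp add: g_def power_one_over)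
      finally show ?thesis .
    qed
    have sx: "summable xs" by (rule summable_comparison_test'[OF sg bxs])
    define x where "x = suminf xs"
    have "xs sums x" unfolding x_def using sx by (rule summable_sums)
    then have s1: "(\<lambda>n. B (xs n)) sums (B x)" by (rule sums)
    have "(\<lambda>n. \<Sum>k<n. B (xs k)) \<longlonglongrightarrow> y"
    proof -
      have eq: "(\<Sum>k<n. B (xs k)) = y - ys n" for n
      proof -
        have "(\<Sum>k<n. B (xs k)) = (\<Sum>k<n. ys k - ys (Suc k))" by (simp add: ysS)
        also have "\<dots> = ys 0 - ys n" by (rule sum_lessThan_telescope')
        finally show ?thesis by (simp add: ys0)
      qed
      have "ys \<longlonglongrightarrow> 0"
      proof (rule Lim_null_comparison)
        show "\<forall>\<^sub>F n in sequentially. norm (ys n) \<le> Y / 2 ^ n" using bys by simp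
        show "(\<lambda>n. Y / 2 ^ n) \<longlonglongrightarrow> 0" by (rule LIMSEQ_divide_realpow_zero) simp
      qed
      then have "(\<lambda>n. y - ys n) \<longlonglongrightarrow> y - 0" by (intro tendsto_diff tendsto_const)
      then show ?thesis by (simp add: eq)
    qed
    then have s2: "(\<lambda>n. B (xs n)) sums y" by (simp add: sums_def)
    have Bx: "B x = y" by (rule sums_unique2[OF s1 s2])
    have "norm x \<le> suminf g" unfolding x_def by (rule norm_suminf_le[OF bxs sg])
    also have "suminf g = (M * Y) * 2"
      unfolding g_def by (simp add: suminf_mult suminf_geometric)
    finally have "norm x \<le> (2 * M) * norm y" by (simp add: Y_def)
    then show ?thesis using Bx by blast
  qed
  then show ?thesis using M0 by (intro exI[of _ "2 * M"]) simp
qed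


lemma orth_add: "a \<in> orth_compl S \<Longrightarrow> b \<in> orth_compl S \<Longrightarrow> a + b \<in> orth_compl S"
  by (simp add: orth_compl_def cinner_add_right)

lemma orth_diff: "a \<in> orth_compl S \<Longrightarrow> b \<in> orth_compl S \<Longrightarrow> a - b \<in> orth_compl S"
  by (simp add: orth_compl_def cinner_diff_right)

lemma orth_scaleC: "a \<in> orth_compl S \<Longrightarrow> scaleC c a \<in> orth_compl S"
  by (simp add: orth_compl_def cinner_scaleC_right)

lemma self_orth_zero:
  fixes v :: "'a::complex_hilbert"
  assumes "v \<in> S" "v \<in> orth_compl S" shows "v = 0"
proof -
  have "cinner v v = 0" using assms by (simp add: orth_compl_def)
  then have "complex_of_real ((norm v)\<^sup>2) = 0" by (simp only: cinner_self_norm)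
  then show ?thesis by simp
qed

lemma surj_douglas:
  fixes A B :: "'a::complex_hilbert \<Rightarrow> 'a"
  assumes BB: "B \<in> BH" and sur: "surj B" and AB: "A \<in> BH"
  shows "\<exists>X\<in>BH. douglas_solution A B X"
proof -
  have bB: "bounded_op B" using BB by (simp add: BH_def)
  have bA: "bounded_op A" using AB by (simp add: BH_def)
  have linB: "bounded_linear B" by (rule bounded_op_linear[OF bB])
  interpret LB: bounded_linear B by (rule linB)
  have Bsc: "\<And>c x. B (scaleC c x) = scaleC c (B x)" using bB by (simp add: bounded_op_def)
  have Aadd: "\<And>x y. A (x + y) = A x + A y" and Asc: "\<And>c x. A (scaleC c x) = scaleC c (A x)"
    using bA by (simp_all add: bounded_op_def)
  obtain KA where KA: "\<And>x. norm (A x) \<le> norm x * KA" using bA by (auto simp: bounded_op_def)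
  obtain C where C0: "C \<ge> 0" and CB: "\<And>y. \<exists>x. B x = y \<and> norm x \<le> C * norm y"
    using open_mapping_bound[OF linB sur] by blast
  define K where "K = ker_op B"
  have K_eq: "K = B -` {0}" by (auto simp: K_def ker_op_def)
  have clK: "closed K" unfolding K_eq by (rule closed_vimage[OF closed_singleton linear_continuous_on[OF linB]])
  have K0: "0 \<in> K" by (simp add: K_def ker_op_def LB.zero)
  have Kadd: "a + b \<in> K" if "a \<in> K" "b \<in> K" for a b using that by (simp add: K_def ker_op_def LB.add)
  have Ksc: "scaleC c a \<in> K" if "a \<in> K" for c a
  proof -
    have "B (scaleC c a) = scaleC c 0" using that by (simp add: K_def ker_op_def Bsc)
    also have "scaleC c 0 = (0::'a)" using scaleC_add_right[of c 0 0] by simp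
    finally show ?thesis by (simp add: K_def ker_op_def)
  qed
  have ex: "\<exists>q. q \<in> orth_compl K \<and> B q = A y \<and> norm q \<le> C * norm (A y)" for y
  proof -
    obtain x where x: "B x = A y" "norm x \<le> C * norm (A y)" using CB by blast
    obtain p where p: "p \<in> K" "x - p \<in> orth_compl K" "norm (x - p) \<le> norm x"
      using proj_exists[OF clK K0 Kadd Ksc] by blast
    have "B (x - p) = A y" using p(1) x(1) by (simp add: LB.diff K_def ker_op_def)
    then show ?thesis using p x by (intro exI[of _ "x - p"]) auto
  qed
  have uniq: "q1 = q2" if "q1 \<in> orth_compl K" "q2 \<in> orth_compl K" "B q1 = B q2" for q1 q2
  proof -
    have "q1 - q2 \<in> K" using that(3) by (simp add: K_def ker_op_def LB.diff)
    moreover have "q1 - q2 \<in> orth_compl K" by (rule orth_diff[OF that(1,2)])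
    ultimately have "q1 - q2 = 0" by (rule self_orth_zero)
    then show ?thesis by simp
  qed
  define X where "X y = (SOME q. q \<in> orth_compl K \<and> B q = A y \<and> norm q \<le> C * norm (A y))" for y
  have X: "X y \<in> orth_compl K \<and> B (X y) = A y \<and> norm (X y) \<le> C * norm (A y)" for y
    unfolding X_def by (rule someI_ex) (rule ex)
  have Xch: "X y = q" if "q \<in> orth_compl K" "B q = A y" for y q
    using X[of y] that uniq by metis
  have "bounded_op X" unfolding bounded_op_def
  proof (intro conjI allI)
    fix a b show "X (a + b) = X a + X b"
      using X[of a] X[of b] by (intro Xch orth_add) (auto simp: LB.add Aadd)
  next
    fix c a show "X (scaleC c a) = scaleC c (X a)"
      using X[of a] by (intro Xch orth_scaleC) (auto simp: Bsc Asc)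
  next
    show "\<exists>K. \<forall>x. norm (X x) \<le> norm x * K"
    proof (intro exI allI)
      fix y
      have "norm (X y) \<le> C * norm (A y)" using X[of y] by simp
      also have "\<dots> \<le> C * (norm y * max KA 0)"
        using KA[of y] C0 by (intro mult_left_mono) (auto intro: order_trans[OF _ mult_left_mono])
      also have "\<dots> = norm y * (C * max KA 0)" by simp
      finally show "norm (X y) \<le> norm y * (C * max KA 0)" .
    qed
  qed
  then have XB: "X \<in> BH" by (simp add: BH_def)
  have "douglas_solution A B X" unfolding douglas_solution_def
  proof (intro conjI)
    show "range A \<subseteq> range B" using sur by simp
    show "X \<in> BH" by (rule XB)
    show "B \<circ> X = A" using X by (simp add: fun_eq_iff)
    show "range X \<subseteq> orth_compl (ker_op B)" using X by (auto simp: K_def)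
  qed
  then show ?thesis using XB by blast
qed

lemma id_BH: "(\<lambda>x::'a::complex_hilbert. x) \<in> BH"
  unfolding BH_def bounded_op_def by (auto intro: exI[of _ 1])

lemma surj_iff_D:
  fixes B :: "'a::complex_hilbert \<Rightarrow> 'a"
  assumes BB: "B \<in> BH"
  shows "range B = UNIV \<longleftrightarrow> (\<forall>A\<in>BH. \<exists>X\<in>BH. douglas_solution A B X)"
proof
  assume "range B = UNIV"
  then have "surj B" by simp
  then show "\<forall>A\<in>BH. \<exists>X\<in>BH. douglas_solution A B X" using surj_douglas[OF BB] by blast
next
  assume "\<forall>A\<in>BH. \<exists>X\<in>BH. douglas_solution A B X"
  then obtain X where "douglas_solution (\<lambda>x. x) B X" using id_BH by blast
  then have "range (\<lambda>x::'a. x) \<subseteq> range B" by (simp add: douglas_solution_def)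
  then show "range B = UNIV" by auto
qed

lemma D_pres:
  fixes \<phi> :: "('a::complex_hilbert \<Rightarrow> 'a) \<Rightarrow> ('a \<Rightarrow> 'a)"
  assumes bij: "bij_betw \<phi> BH BH" and pres: "preserves_douglas_both \<phi>"
    and AB: "A \<in> BH" and BB: "B \<in> BH"
  shows "(\<exists>X\<in>BH. douglas_solution A B X) \<longleftrightarrow> (\<exists>Y\<in>BH. douglas_solution (\<phi> A) (\<phi> B) Y)"
proof
  assume "\<exists>X\<in>BH. douglas_solution A B X"
  then obtain X where X: "X \<in> BH" "douglas_solution A B X" by blast
  then have "douglas_solution (\<phi> A) (\<phi> B) (\<phi> X)" using pres AB BB unfolding preserves_douglas_both_def by blast
  moreover have "\<phi> X \<in> BH" using bij X(1) by (auto simp: bij_betw_def)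
  ultimately show "\<exists>Y\<in>BH. douglas_solution (\<phi> A) (\<phi> B) Y" by blast
next
  assume "\<exists>Y\<in>BH. douglas_solution (\<phi> A) (\<phi> B) Y"
  then obtain Y where Y: "Y \<in> BH" "douglas_solution (\<phi> A) (\<phi> B) Y" by blast
  have "Y \<in> \<phi> ` BH" using bij Y(1) by (simp add: bij_betw_def)
  then obtain X where X: "X \<in> BH" "Y = \<phi> X" by blast
  then have "douglas_solution A B X" using Y(2) pres AB BB unfolding preserves_douglas_both_def by blast
  then show "\<exists>X\<in>BH. douglas_solution A B X" using X(1) by blast
qed

theorem claim1:
  fixes \<phi> :: "('a::complex_hilbert \<Rightarrow> 'a) \<Rightarrow> ('a \<Rightarrow> 'a)"
  assumes "\<not> fin_dim_C TYPE('a)"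
    and "bij_betw \<phi> BH BH"
    and "preserves_douglas_both \<phi>"
    and "B \<in> BH"
  shows "range B = UNIV \<longleftrightarrow> range (\<phi> B) = UNIV"
proof -
  have bij: "bij_betw \<phi> BH BH" and pres: "preserves_douglas_both \<phi>" and BB: "B \<in> BH" using assms by auto
  have PB: "\<phi> B \<in> BH" using bij BB by (auto simp: bij_betw_def)
  have img: "\<phi> ` BH = BH" using bij by (simp add: bij_betw_def)
  have "range B = UNIV \<longleftrightarrow> (\<forall>A\<in>BH. \<exists>X\<in>BH. douglas_solution A B X)" by (rule surj_iff_D[OF BB])
  also have "\<dots> \<longleftrightarrow> (\<forall>A\<in>BH. \<exists>Y\<in>BH. douglas_solution (\<phi> A) (\<phi> B) Y)"
    using D_pres[OF bij pres _ BB] by blast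
  also have "\<dots> \<longleftrightarrow> (\<forall>A'\<in>\<phi> ` BH. \<exists>Y\<in>BH. douglas_solution A' (\<phi> B) Y)" by blast
  also have "\<dots> \<longleftrightarrow> (\<forall>A'\<in>BH. \<exists>Y\<in>BH. douglas_solution A' (\<phi> B) Y)" by (simp only: img)
  also have "\<dots> \<longleftrightarrow> range (\<phi> B) = UNIV" by (rule surj_iff_D[OF PB, symmetric])
  finally show ?thesis .
qed

end
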